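(* Let $n\ge0$ and run the Tiden–Arnborg algorithm on $\sigma(n)$, performing sum transformations level by level. For every level $k<n+3$, a path of lateral edges from $x_{1^{k-1}}$ to $y_{2^{k-1}}$ is created.
   Context: Variables are $T$, $x_s$, $y_s$ with $s$ a string over $\{1,2\}$ ($x=x_\varepsilon$, $y=y_\varepsilon$); the level of $x_s$ or $y_s$ is $|s|+1$. For $n\ge0$, $\sigma(n)$ consists of, for all $0\le i\le n$: $x_{1^i}=^?x_{1^{i+1}}+x_{1^i2}$, $y_{2^i}=^?y_{2^i1}+y_{2^{i+1}}$, $y_{2^i1}=^?T\times x_{1^i2}$, $x=^?T\times y$, $x_{1^{i+1}}=^?x_{1^{i+2}}+x_{1^{i+1}2}$; its variables occupy levels $1,\dots,n+3$. A lateral edge from $u$ to $v$ means the equation $u=^?T\times v$ is present. A variable $U_i$ ($U\in\{x,y\}$) is a peak if the system contains both $U_i=^?U_{i1}+U_{i2}$ and $U_i=^?T\times W_j$. A sum transformation at a peak $U_i$ replaces $U_i=^?U_{i1}+U_{i2}$ by $W_j=^?W_{j1}+W_{j2}$, $U_{i1}=^?T\times W_{j1}$, $U_{i2}=^?T\times W_{j2}$ (keeping $U_i=^?T\times W_j$), with $W_{j1},W_{j2}$ identified with the existing children of $W_j$ if $W_j$ already has a sum equation. The Tiden–Arnborg algorithm (for $x\times(y+z)=x\times y+x\times z$) applies sum transformations as long as possible, completing all those at one level before the next. *)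

theory Defs
  imports Main
begin

(* Digits of the index strings over {1,2} *)
datatype dig = D1 | D2

(* Variables: T, x_s, y_s with s a string over {1,2} *)
datatype var = Tv | Xv "dig list" | Yv "dig list"

(* Equations:  SumEq a b c  is  a =? b + c ;  LatEq u v  is  u =? T \<times> v *)
datatype eqn = SumEq var var var | LatEq var var

type_synonym system = "eqn set"

fun level :: "var \<Rightarrow> nat" where
  "level Tv = 0"
| "level (Xv s) = length s + 1"
| "level (Yv s) = length s + 1"

fun ch :: "var \<Rightarrow> dig \<Rightarrow> var" where
  "ch Tv d = Tv"
| "ch (Xv s) d = Xv (s @ [d])"
| "ch (Yv s) d = Yv (s @ [d])"

definition ones :: "nat \<Rightarrow> dig list" where "ones i = replicate i D1"
definition twos :: "nat \<Rightarrow> dig list" where "twos i = replicate i D2"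

definition sigma :: "nat \<Rightarrow> system" where
  "sigma n =
     {SumEq (Xv (ones i)) (Xv (ones (Suc i))) (Xv (ones i @ [D2])) | i. i \<le> n}
   \<union> {SumEq (Yv (twos i)) (Yv (twos i @ [D1])) (Yv (twos (Suc i))) | i. i \<le> n}
   \<union> {LatEq (Yv (twos i @ [D1])) (Xv (ones i @ [D2])) | i. i \<le> n}
   \<union> {LatEq (Xv []) (Yv [])}
   \<union> {SumEq (Xv (ones (Suc i))) (Xv (ones (Suc (Suc i)))) (Xv (ones (Suc i) @ [D2])) | i. i \<le> n}"

definition sum_eq :: "var \<Rightarrow> eqn" where
  "sum_eq u = SumEq u (ch u D1) (ch u D2)"

definition lat :: "system \<Rightarrow> (var \<times> var) set" where
  "lat S = {(u, v). LatEq u v \<in> S}"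

definition is_peak :: "system \<Rightarrow> var \<Rightarrow> bool" where
  "is_peak S u \<longleftrightarrow> sum_eq u \<in> S \<and> (\<exists>w. LatEq u w \<in> S)"

definition sum_transform :: "system \<Rightarrow> var \<Rightarrow> var \<Rightarrow> system" where
  "sum_transform S u w =
     (S - {sum_eq u}) \<union> {sum_eq w, LatEq (ch u D1) (ch w D1), LatEq (ch u D2) (ch w D2)}"

definition ta_step :: "system \<Rightarrow> system \<Rightarrow> bool" where
  "ta_step S S' \<longleftrightarrow> (\<exists>u w. sum_eq u \<in> S \<and> LatEq u w \<in> S \<and>
       (\<forall>v. is_peak S v \<longrightarrow> level u \<le> level v) \<and> S' = sum_transform S u w)"

(* a run of the algorithm on sigma(n): transformations are applied as long as possible;
   once none is applicable the system stays unchanged *)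
definition ta_run :: "nat \<Rightarrow> (nat \<Rightarrow> system) \<Rightarrow> bool" where
  "ta_run n f \<longleftrightarrow> f 0 = sigma n \<and>
     (\<forall>i. ta_step (f i) (f (Suc i)) \<or> ((\<nexists>S'. ta_step (f i) S') \<and> f (Suc i) = f i))"

end

theory Submission
  imports Defs
begin

fun succ :: "dig list \<Rightarrow> dig list option" where
  "succ [] = None"
| "succ (D1 # r) = Some (D2 # r)"
| "succ (D2 # r) = map_option (Cons D1) (succ r)"

fun val :: "dig list \<Rightarrow> nat" where
  "val [] = 0"
| "val (D1 # r) = 2 * val r"
| "val (D2 # r) = 2 * val r + 1"

fun key :: "var \<Rightarrow> nat" where
  "key Tv = 0" | "key (Xv s) = 2 * val s" | "key (Yv s) = 2 * val s + 1"

definition Eedge :: "var \<Rightarrow> var \<Rightarrow> bool" where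
  "Eedge a b \<longleftrightarrow> (\<exists>s. a = Xv s \<and> b = Yv s) \<or> (\<exists>s t. a = Yv s \<and> b = Xv t \<and> succ s = Some t)"

lemma succ_app: "succ s = Some t \<Longrightarrow> succ (s @ [d]) = Some (t @ [d])"
  by (induction s arbitrary: t rule: succ.induct) auto

lemma succ_len: "succ s = Some t \<Longrightarrow> length t = length s"
  by (induction s arbitrary: t rule: succ.induct) auto

lemma succ_val: "succ s = Some t \<Longrightarrow> val t = Suc (val s)"
  by (induction s arbitrary: t rule: succ.induct) auto

lemma val_bound: "val s < 2 ^ length s"
  by (induction s rule: val.induct) auto

lemma succ_twos: "succ (twos i @ [D1]) = Some (ones i @ [D2])"
  by (induction i) (auto simp: twos_def ones_def)

lemma ch_inj: "a \<noteq> Tv \<Longrightarrow> b \<noteq> Tv \<Longrightarrow> ch a d = ch b e \<Longrightarrow> a = b \<and> d = e"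
  by (cases a; cases b) auto

lemma ch_nT: "a \<noteq> Tv \<Longrightarrow> ch a d \<noteq> Tv"
  by (cases a) auto

lemma level_ch: "a \<noteq> Tv \<Longrightarrow> level (ch a d) = Suc (level a)"
  by (cases a) auto

lemma Eedge_ch: "Eedge a b \<Longrightarrow> Eedge (ch a d) (ch b d)"
  unfolding Eedge_def using succ_app by auto

lemma Eedge_fun: "Eedge a b \<Longrightarrow> Eedge a c \<Longrightarrow> b = c"
  unfolding Eedge_def by auto

lemma Eedge_key: "Eedge a b \<Longrightarrow> key a < key b"
  unfolding Eedge_def using succ_val by auto

lemma Eedge_level: "Eedge a b \<Longrightarrow> level a = level b \<and> a \<noteq> Tv \<and> b \<noteq> Tv \<and> a \<noteq> b"
  unfolding Eedge_def using succ_len by auto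

lemma key_bound: "key v < 2 ^ level v"
proof (cases v)
  case (Xv s) then show ?thesis using val_bound[of s] by auto
next
  case (Yv s) then show ?thesis using val_bound[of s] by auto
qed auto

lemma lat_transform: "lat (sum_transform S u w) = lat S \<union> {(ch u D1, ch w D1), (ch u D2, ch w D2)}"
  unfolding lat_def sum_transform_def sum_eq_def by auto

lemma sum_eq_inj: "sum_eq a = sum_eq b \<longleftrightarrow> a = b"
  unfolding sum_eq_def by auto

lemma sumeq_transform: "sum_eq v \<in> sum_transform S u w \<longleftrightarrow> (sum_eq v \<in> S \<and> v \<noteq> u) \<or> v = w"
  unfolding sum_transform_def by (auto simp: sum_eq_inj) (auto simp: sum_eq_def)

definition Cov :: "system \<Rightarrow> var \<Rightarrow> bool" where
  "Cov S v \<longleftrightarrow> sum_eq v \<in> S \<or> (\<exists>w. (v,w) \<in> lat S \<and> (ch v D1, ch w D1) \<in> lat S \<and> (ch v D2, ch w D2) \<in> lat S)"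

definition Inv :: "nat \<Rightarrow> system \<Rightarrow> bool" where
"Inv n S \<longleftrightarrow>
  (\<forall>a b. (a,b) \<in> lat S \<longrightarrow> Eedge a b \<and> level a \<le> n+3) \<and>
  (\<forall>v. sum_eq v \<in> S \<longrightarrow> v \<noteq> Tv \<and> level v \<le> n+2) \<and>
  (\<forall>v w e. (ch v e, ch w e) \<in> lat S \<longrightarrow> (v,w) \<in> lat S) \<and>
  (\<forall>v w. (v,w) \<in> lat S \<longrightarrow> sum_eq v \<notin> S \<longrightarrow> Cov S v \<longrightarrow> Cov S w) \<and>
  (\<forall>i \<le> n+1. Cov S (Xv (ones i))) \<and>
  (Xv [], Yv []) \<in> lat S \<and>
  (\<forall>i \<le> n. (Yv (twos i @ [D1]), Xv (ones i @ [D2])) \<in> lat S)"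

lemma lat_sigma: "lat (sigma n) = {(Xv [], Yv [])} \<union> {(Yv (twos i @ [D1]), Xv (ones i @ [D2])) | i. i \<le> n}"
  unfolding lat_def sigma_def by auto

lemma sum_sigma: "sum_eq v \<in> sigma n \<Longrightarrow> (\<exists>i \<le> n+1. v = Xv (ones i)) \<or> (\<exists>i \<le> n. v = Yv (twos i))"
  unfolding sigma_def sum_eq_def
  apply (elim UnE)
  subgoal by clarsimp (metis le_SucI)
  subgoal by auto
  subgoal by auto
  subgoal by auto
  subgoal by clarsimp (metis Suc_le_mono)
  done

lemma sum_sigma_X: "i \<le> n+1 \<Longrightarrow> sum_eq (Xv (ones i)) \<in> sigma n"
proof -
  assume "i \<le> n+1"
  have e: "sum_eq (Xv (ones i)) = SumEq (Xv (ones i)) (Xv (ones (Suc i))) (Xv (ones i @ [D2]))"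
    by (simp add: sum_eq_def ones_def replicate_append_same)
  show ?thesis
  proof (cases "i \<le> n")
    case True then show ?thesis unfolding e sigma_def by blast
  next
    case False
    then obtain j where "i = Suc j" "j \<le> n" using \<open>i \<le> n+1\<close> by (cases i) auto
    then show ?thesis unfolding e sigma_def by blast
  qed
qed

lemma sum_sigma_Y: "i \<le> n \<Longrightarrow> sum_eq (Yv (twos i)) \<in> sigma n"
proof -
  assume "i \<le> n"
  have e: "sum_eq (Yv (twos i)) = SumEq (Yv (twos i)) (Yv (twos i @ [D1])) (Yv (twos (Suc i)))"
    by (simp add: sum_eq_def twos_def replicate_append_same)
  show ?thesis unfolding e sigma_def using \<open>i \<le> n\<close> by blast
qed

lemma ones_lvl: "level (Xv (ones i)) = Suc i" by (simp add: ones_def)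
lemma twos_lvl: "level (Yv (twos i)) = Suc i" by (simp add: twos_def)

lemma no_ch_sigma: "(ch v e, ch w e) \<notin> lat (sigma n)"
proof
  assume "(ch v e, ch w e) \<in> lat (sigma n)"
  then have "(ch v e = Xv [] \<and> ch w e = Yv []) \<or> (\<exists>i. ch v e = Yv (twos i @ [D1]) \<and> ch w e = Xv (ones i @ [D2]))"
    unfolding lat_sigma by auto
  then show False by (cases v; cases w) auto
qed

lemma twos_D1: "twos i @ [D1] \<noteq> twos j"
proof
  assume "twos i @ [D1] = twos j"
  then have "D1 \<in> set (twos j)" by (metis in_set_conv_decomp)
  then show False by (simp add: twos_def)
qed

lemma Inv_init: "Inv n (sigma n)"
  unfolding Inv_def
proof (intro conjI allI impI)
  fix a b assume "(a,b) \<in> lat (sigma n)"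
  then show "Eedge a b"
    unfolding lat_sigma Eedge_def using succ_twos by auto
next
  fix a b assume "(a,b) \<in> lat (sigma n)"
  then show "level a \<le> n+3"
    unfolding lat_sigma by (auto simp: twos_def)
next
  fix v assume "sum_eq v \<in> sigma n"
  from sum_sigma[OF this] show "v \<noteq> Tv"
    by auto
next
  fix v assume "sum_eq v \<in> sigma n"
  from sum_sigma[OF this] show "level v \<le> n+2"
    by (auto simp: ones_def twos_def)
next
  fix v w e assume "(ch v e, ch w e) \<in> lat (sigma n)"
  then show "(v,w) \<in> lat (sigma n)" using no_ch_sigma by blast
next
  fix v w assume vw: "(v,w) \<in> lat (sigma n)" and "sum_eq v \<notin> sigma n" and cv: "Cov (sigma n) v"
  have nc: "\<not> (\<exists>w. (v,w) \<in> lat (sigma n) \<and> (ch v D1, ch w D1) \<in> lat (sigma n) \<and> (ch v D2, ch w D2) \<in> lat (sigma n))"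
    using no_ch_sigma by blast
  from vw consider "v = Xv []" "w = Yv []" | i where "v = Yv (twos i @ [D1])" "i \<le> n"
    unfolding lat_sigma by auto
  then show "Cov (sigma n) w"
  proof cases
    case 1 then show ?thesis using sum_sigma_Y[of 0 n] by (simp add: Cov_def twos_def)
  next
    case 2
    have "sum_eq v \<notin> sigma n" using sum_sigma[of v n] 2 twos_D1 by auto
    with cv nc show ?thesis unfolding Cov_def by blast
  qed
next
  fix i assume "i \<le> n+1"
  then show "Cov (sigma n) (Xv (ones i))" using sum_sigma_X Cov_def by blast
next
  show "(Xv [], Yv []) \<in> lat (sigma n)" unfolding lat_sigma by auto
next
  fix i assume "i \<le> n"
  then show "(Yv (twos i @ [D1]), Xv (ones i @ [D2])) \<in> lat (sigma n)" unfolding lat_sigma by auto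
qed

lemma Cov_mono:
  assumes su: "sum_eq u \<in> S" and uw: "(u,w) \<in> lat S" and c: "Cov S v"
  shows "Cov (sum_transform S u w) v"
proof -
  note L = lat_transform[of S u w]
  show ?thesis
  proof (cases "sum_eq v \<in> S")
    case True
    show ?thesis
    proof (cases "v = u")
      case True
      then show ?thesis unfolding Cov_def L using uw by auto
    next
      case False
      then show ?thesis unfolding Cov_def using \<open>sum_eq v \<in> S\<close> sumeq_transform by blast
    qed
  next
    case False
    then obtain w' where "(v,w') \<in> lat S" "(ch v D1, ch w' D1) \<in> lat S" "(ch v D2, ch w' D2) \<in> lat S"
      using c unfolding Cov_def by blast
    then show ?thesis unfolding Cov_def L by blast
  qed
qed

lemma Inv_step:
  assumes I: "Inv n S" and su: "sum_eq u \<in> S" and uw: "(u,w) \<in> lat S"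
  shows "Inv n (sum_transform S u w)"
proof -
  let ?S = "sum_transform S u w"
  note L = lat_transform[of S u w]
  from I have A: "\<And>a b. (a,b) \<in> lat S \<Longrightarrow> Eedge a b \<and> level a \<le> n+3"
    and B: "\<And>v. sum_eq v \<in> S \<Longrightarrow> v \<noteq> Tv \<and> level v \<le> n+2"
    and C: "\<And>v w e. (ch v e, ch w e) \<in> lat S \<Longrightarrow> (v,w) \<in> lat S"
    and D: "\<And>v w. (v,w) \<in> lat S \<Longrightarrow> sum_eq v \<notin> S \<Longrightarrow> Cov S v \<Longrightarrow> Cov S w"
    and E: "\<And>i. i \<le> n+1 \<Longrightarrow> Cov S (Xv (ones i))"
    and F: "(Xv [], Yv []) \<in> lat S"
    and G: "\<And>i. i \<le> n \<Longrightarrow> (Yv (twos i @ [D1]), Xv (ones i @ [D2])) \<in> lat S"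
    unfolding Inv_def by blast+
  have Euw: "Eedge u w" using A uw by blast
  have lu: "level u \<le> n+2" "u \<noteq> Tv" using B su by auto
  have lw: "level w = level u" "w \<noteq> Tv" "u \<noteq> w" using Eedge_level[OF Euw] by auto
  have A': "Eedge a b \<and> level a \<le> n+3" if "(a,b) \<in> lat ?S" for a b
    using that A Eedge_ch[OF Euw] level_ch[OF lu(2)] lu(1) unfolding L by fastforce
  have fun': "b = c" if "(a,b) \<in> lat ?S" "(a,c) \<in> lat ?S" for a b c
    using A'[OF that(1)] A'[OF that(2)] Eedge_fun by blast
  have B': "v \<noteq> Tv \<and> level v \<le> n+2" if "sum_eq v \<in> ?S" for v
    using that B lu lw unfolding sumeq_transform by auto
  have newch: "v = u \<and> w1 = w" if "ch v e = ch u d" "ch w1 e = ch w d" for v w1 e d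
  proof -
    have "v \<noteq> Tv" using that(1) ch_nT[OF lu(2), of d] by (metis ch.simps(1))
    moreover have "w1 \<noteq> Tv" using that(2) ch_nT[OF lw(2), of d] by (metis ch.simps(1))
    ultimately show ?thesis using ch_inj lu(2) lw(2) that by blast
  qed
  have C': "(v,w1) \<in> lat ?S" if "(ch v e, ch w1 e) \<in> lat ?S" for v w1 e
    using that C newch uw unfolding L by blast
  have D': "Cov ?S w1" if vw: "(v,w1) \<in> lat ?S" and ns: "sum_eq v \<notin> ?S" and cv: "Cov ?S v" for v w1
  proof (cases "v = u")
    case True
    then have "w1 = w" using fun' vw uw L by blast
    then show ?thesis unfolding Cov_def sumeq_transform by blast
  next
    case False
    have nsS: "sum_eq v \<notin> S" using ns False sumeq_transform by blast
    then obtain w' where e0: "(v,w') \<in> lat ?S" and e1: "(ch v D1, ch w' D1) \<in> lat ?S"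
        and e2: "(ch v D2, ch w' D2) \<in> lat ?S"
      using cv ns unfolding Cov_def by blast
    have e1S: "(ch v D1, ch w' D1) \<in> lat S" using e1 newch False unfolding L by blast
    have e2S: "(ch v D2, ch w' D2) \<in> lat S" using e2 newch False unfolding L by blast
    have e0S: "(v,w') \<in> lat S" using C e1S by blast
    have "w1 = w'" using fun' vw e0 by blast
    then have "(v,w1) \<in> lat S" using e0S by simp
    moreover have "Cov S v" unfolding Cov_def using e0S e1S e2S by blast
    ultimately have "Cov S w1" using D nsS by blast
    then show ?thesis using Cov_mono su uw by blast
  qed
  show ?thesis unfolding Inv_def
    using A' B' C' D' E Cov_mono[OF su uw] F G L by blast
qed

lemma finite_level: "finite {v. level v \<le> m}"
proof -
  have fu: "finite (UNIV :: dig set)"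
  proof -
    have "(UNIV :: dig set) = {D1, D2}" using dig.exhaust by auto
    then show ?thesis by (metis finite.emptyI finite_insert)
  qed
  let ?L = "{xs. set xs \<subseteq> (UNIV::dig set) \<and> length xs \<le> m}"
  have "{v. level v \<le> m} \<subseteq> insert Tv (Xv ` ?L \<union> Yv ` ?L)"
  proof
    fix v assume "v \<in> {v. level v \<le> m}"
    then show "v \<in> insert Tv (Xv ` ?L \<union> Yv ` ?L)" by (cases v) auto
  qed
  moreover have "finite (insert Tv (Xv ` ?L \<union> Yv ` ?L))"
    using finite_lists_length_le[OF fu, of m] by blast
  ultimately show ?thesis using finite_subset by blast
qed

definition Fs :: "nat \<Rightarrow> (var \<times> var) set" where
  "Fs n = {(a,b). Eedge a b \<and> level a \<le> n+3}"

definition mu1 :: "nat \<Rightarrow> system \<Rightarrow> nat" where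
  "mu1 n S = card (Fs n - lat S)"

definition mu2 :: "nat \<Rightarrow> system \<Rightarrow> nat" where
  "mu2 n S = (\<Sum>v\<in>{v. sum_eq v \<in> S}. 2^(n+3) - key v)"

lemma finite_Fs: "finite (Fs n)"
proof -
  have "Fs n \<subseteq> {v. level v \<le> n+3} \<times> {v. level v \<le> n+3}"
    unfolding Fs_def using Eedge_level by fastforce
  then show ?thesis using finite_level finite_subset by blast
qed

lemma mu_step:
  assumes I: "Inv n S" and su: "sum_eq u \<in> S" and uw: "(u,w) \<in> lat S"
  shows "((mu1 n (sum_transform S u w), mu2 n (sum_transform S u w)), (mu1 n S, mu2 n S))
           \<in> less_than <*lex*> less_than"
proof -
  let ?S = "sum_transform S u w"
  note L = lat_transform[of S u w]
  have I': "Inv n ?S" using Inv_step[OF I su uw] .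
  have sub': "lat ?S \<subseteq> Fs n" using I' unfolding Inv_def Fs_def by blast
  have Euw: "Eedge u w" using I uw unfolding Inv_def by blast
  have lu: "level u \<le> n+2" "u \<noteq> Tv" using I su unfolding Inv_def by auto
  have lw: "level w = level u" "w \<noteq> Tv" "u \<noteq> w" using Eedge_level[OF Euw] by auto
  show ?thesis
  proof (cases "(ch u D1, ch w D1) \<in> lat S \<and> (ch u D2, ch w D2) \<in> lat S")
    case False
    then obtain d where nd: "(ch u d, ch w d) \<notin> lat S" "(ch u d, ch w d) \<in> lat ?S" unfolding L by blast
    have "Fs n - lat ?S \<subset> Fs n - lat S"
      using nd sub' L by blast
    then have "mu1 n ?S < mu1 n S" unfolding mu1_def
      using psubset_card_mono finite_Fs by (metis finite_Diff)
    then show ?thesis by simp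
  next
    case True
    then have eq: "lat ?S = lat S" using L by blast
    let ?T = "{v. sum_eq v \<in> S}"
    have fT: "finite ?T"
    proof -
      have "?T \<subseteq> {v. level v \<le> n+3}" using I unfolding Inv_def by force
      then show ?thesis using finite_level finite_subset by blast
    qed
    have T': "{v. sum_eq v \<in> ?S} = insert w (?T - {u})" using sumeq_transform by blast
    have ku: "key u < key w" using Eedge_key[OF Euw] .
    have kw: "key w < 2^(n+3)"
    proof -
      have "key w < 2 ^ level w" by (rule key_bound)
      also have "\<dots> \<le> 2^(n+3)" using lw lu by (intro power_increasing) auto
      finally show ?thesis .
    qed
    have uT: "u \<in> ?T" using su by simp
    let ?g = "\<lambda>v. (2::nat)^(n+3) - key v"
    have s1: "sum ?g ?T = ?g u + sum ?g (?T - {u})" using sum.remove[OF fT uT] .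
    have s2: "sum ?g (insert w (?T - {u})) \<le> ?g w + sum ?g (?T - {u})"
      using fT by (simp add: sum.insert_if)
    have "?g w < ?g u" using ku kw by linarith
    then have "mu2 n ?S < mu2 n S" unfolding mu2_def T' using s1 s2 by linarith
    moreover have "mu1 n ?S = mu1 n S" unfolding mu1_def eq ..
    ultimately show ?thesis by simp
  qed
qed

lemma stuck_nopeak:
  assumes st: "\<not> (\<exists>S'. ta_step S S')" and sv: "sum_eq v \<in> S" and vw: "(v,w) \<in> lat S"
  shows False
proof -
  have "is_peak S v" using sv vw unfolding is_peak_def lat_def by auto
  then obtain u where pu: "is_peak S u" and mn: "\<forall>y. is_peak S y \<longrightarrow> level u \<le> level y"
    using ex_has_least_nat[of "is_peak S" v level] by blast
  then obtain w' where "sum_eq u \<in> S" "LatEq u w' \<in> S" unfolding is_peak_def by blast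
  then have "ta_step S (sum_transform S u w')" unfolding ta_step_def using mn by blast
  with st show False by blast
qed

lemma stuck_close:
  assumes I: "Inv n S" and st: "\<not> (\<exists>S'. ta_step S S')" and cv: "Cov S v" and vw: "(v,w) \<in> lat S"
  shows "Cov S w \<and> (\<forall>d. (ch v d, ch w d) \<in> lat S)"
proof -
  have ns: "sum_eq v \<notin> S" using stuck_nopeak[OF st _ vw] by blast
  have "Cov S w" using I ns cv vw unfolding Inv_def by blast
  moreover obtain w' where e0: "(v,w') \<in> lat S" and e1: "(ch v D1, ch w' D1) \<in> lat S"
      and e2: "(ch v D2, ch w' D2) \<in> lat S"
    using cv ns unfolding Cov_def by blast
  moreover have "w' = w"
  proof -
    have A: "\<And>a b. (a,b) \<in> lat S \<Longrightarrow> Eedge a b" using I unfolding Inv_def by blast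
    show ?thesis using A[OF e0] A[OF vw] Eedge_fun by blast
  qed
  ultimately show ?thesis by (metis dig.exhaust)
qed

lemma Cov_trancl:
  assumes I: "Inv n S" and st: "\<not> (\<exists>S'. ta_step S S')"
    and p: "(a,b) \<in> (lat S)\<^sup>+" and ca: "Cov S a"
  shows "Cov S b \<and> (ch a d, ch b d) \<in> (lat S)\<^sup>+"
  using p
proof (induction rule: trancl_induct)
  case (base y)
  then show ?case using stuck_close[OF I st ca] by blast
next
  case (step y z)
  then show ?case using stuck_close[OF I st _ step(2)]
    by (meson trancl.trancl_into_trancl)
qed

lemma stuck_path:
  assumes I: "Inv n S" and st: "\<not> (\<exists>S'. ta_step S S')"
  shows "j \<le> n+1 \<Longrightarrow> (Xv (ones j), Yv (twos j)) \<in> (lat S)\<^sup>+"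
proof (induction j)
  case 0
  then show ?case using I unfolding Inv_def by (auto simp: ones_def twos_def)
next
  case (Suc j)
  then have P: "(Xv (ones j), Yv (twos j)) \<in> (lat S)\<^sup>+" and jn: "j \<le> n" by auto
  have cx: "Cov S (Xv (ones j))" using I jn unfolding Inv_def by auto
  have p1: "(Xv (ones j @ [D1]), Yv (twos j @ [D1])) \<in> (lat S)\<^sup>+"
    using Cov_trancl[OF I st P cx, of D1] by simp
  have p2: "(Xv (ones j @ [D2]), Yv (twos j @ [D2])) \<in> (lat S)\<^sup>+"
    using Cov_trancl[OF I st P cx, of D2] by simp
  have e: "(Yv (twos j @ [D1]), Xv (ones j @ [D2])) \<in> lat S" using I jn unfolding Inv_def by auto
  have "(Xv (ones j @ [D1]), Yv (twos j @ [D2])) \<in> (lat S)\<^sup>+"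
    using p1 e p2 by (meson trancl.trancl_into_trancl trancl_trans r_into_trancl)
  moreover have "ones j @ [D1] = ones (Suc j)" "twos j @ [D2] = twos (Suc j)"
    by (simp_all add: ones_def twos_def replicate_append_same)
  ultimately show ?case by simp
qed

theorem lemma5:
  fixes n k :: nat and f :: "nat \<Rightarrow> system"
  assumes "ta_run n f" and "1 \<le> k" and "k < n + 3"
  shows "\<exists>i. (Xv (ones (k - 1)), Yv (twos (k - 1))) \<in> (lat (f i))\<^sup>+"
proof -
  have f0: "f 0 = sigma n" and fs: "\<And>i. ta_step (f i) (f (Suc i)) \<or> ((\<nexists>S'. ta_step (f i) S') \<and> f (Suc i) = f i)"
    using assms(1) unfolding ta_run_def by blast+
  have inv: "Inv n (f i)" for i
  proof (induction i)
    case 0 then show ?case using f0 Inv_init by simp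
  next
    case (Suc i)
    show ?case
    proof (cases "ta_step (f i) (f (Suc i))")
      case True
      then obtain u w where "sum_eq u \<in> f i" "LatEq u w \<in> f i" "f (Suc i) = sum_transform (f i) u w"
        unfolding ta_step_def by blast
      then show ?thesis using Inv_step[OF Suc] unfolding lat_def by auto
    next
      case False
      then show ?thesis using fs[of i] Suc by auto
    qed
  qed
  let ?r = "inv_image (less_than <*lex*> less_than) (\<lambda>S. (mu1 n S, mu2 n S))"
  have wf: "wf ?r" by (intro wf_inv_image wf_lex_prod wf_less_than)
  have "\<exists>i. \<not> (\<exists>S'. ta_step (f i) S')"
  proof (rule ccontr)
    assume "\<not> ?thesis"
    then have allst: "ta_step (f i) (f (Suc i))" for i using fs by blast
    have "(f (Suc i), f i) \<in> ?r" for i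
    proof -
      obtain u w where "sum_eq u \<in> f i" "LatEq u w \<in> f i" "f (Suc i) = sum_transform (f i) u w"
        using allst[of i] unfolding ta_step_def by blast
      then show ?thesis using mu_step[OF inv[of i]] unfolding lat_def by auto
    qed
    then show False using wf_no_infinite_down_chainE[OF wf, of f] by blast
  qed
  then obtain i where st: "\<not> (\<exists>S'. ta_step (f i) S')" by blast
  have "(Xv (ones (k - 1)), Yv (twos (k - 1))) \<in> (lat (f i))\<^sup>+"
    using stuck_path[OF inv st] assms(3) by simp
  then show ?thesis by blast
qed

end
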